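(* Let $n\ge3$, $N=\binom n2$, fix distinct $s,t\in[n]$, and let $S=\{\{u,v\}:u\in\{s,t\},v\in[n]\setminus\{s,t\}\}$. For $w\in\mathbb{R}^N$ let $F(w)=\arg\min_{y\in\{-1,1\}^n,\ y_s=1,\ y_t=-1}\sum_{\{i,j\}}w_{\{i,j\}}(1-y_iy_j)$. Let $w\in\mathbb{R}^N$ be such that this minimizer is unique, call it $f(w)$, and let $w'$ differ from $w$ only on one pair $\{u,v\}$, by $z\in[-1,1]$. Then there exists $a\in\mathbb{R}^N$ supported on $S$, with $\|a\|_1\le2$, which depends only on $f(w)$, the pair $\{u,v\}$ and $z$, such that $F(w'+a)$ has the unique minimizer $f(w)$. In other words, $S$ is a dominating set of sensitivity $2$ for the (unique) minimum $s$-$t$ cut function $f$.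
   Context: A vector $y\in\{-1,1\}^n$ with $y_s=1,y_t=-1$ encodes an $s$-$t$ cut (the two sides being $\{i:y_i=1\}$ and $\{i:y_i=-1\}$); $\sum w_{\{i,j\}}(1-y_iy_j)$ is twice the weight of the cut for weight vector $w$ indexed by unordered pairs of $[n]$. *)

theory Defs
  imports Complex_Main
begin

text \<open>Vertices are [n] = {0..<n}. Unordered pairs are represented as two-element sets.
  A weight vector in R^N, N = n choose 2, is a function on nat sets; only its values on
  pairs n matter.\<close>

definition pairs :: "nat \<Rightarrow> nat set set" where
  "pairs n = {{i, j} | i j. i < n \<and> j < n \<and> i \<noteq> j}"

definition cuts :: "nat \<Rightarrow> nat \<Rightarrow> nat \<Rightarrow> (nat \<Rightarrow> real) set" where
  "cuts n s t = {y. (\<forall>i<n. y i = 1 \<or> y i = -1) \<and> (\<forall>i\<ge>n. y i = 0) \<and> y s = 1 \<and> y t = -1}"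

definition cut_cost :: "nat \<Rightarrow> (nat set \<Rightarrow> real) \<Rightarrow> (nat \<Rightarrow> real) \<Rightarrow> real" where
  "cut_cost n w y = (\<Sum>(i, j) \<in> {(i, j). i < j \<and> j < n}. w {i, j} * (1 - y i * y j))"

definition argmin_cuts :: "nat \<Rightarrow> nat \<Rightarrow> nat \<Rightarrow> (nat set \<Rightarrow> real) \<Rightarrow> (nat \<Rightarrow> real) set" where
  "argmin_cuts n s t w =
     {y \<in> cuts n s t. \<forall>y' \<in> cuts n s t. cut_cost n w y \<le> cut_cost n w y'}"

definition dom_pairs :: "nat \<Rightarrow> nat \<Rightarrow> nat \<Rightarrow> nat set set" where
  "dom_pairs n s t = {{u, v} | u v. u \<in> {s, t} \<and> v < n \<and> v \<notin> {s, t}}"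

definition l1norm :: "nat \<Rightarrow> (nat set \<Rightarrow> real) \<Rightarrow> real" where
  "l1norm n a = (\<Sum>e \<in> pairs n. \<bar>a e\<bar>)"

end

theory Submission
  imports Defs
begin

lemma fin_S: "finite {(i, j). i < j \<and> j < (n::nat)}"
  by (rule finite_subset[of _ "{..<n} \<times> {..<n}"]) auto

lemma cost_add: "cut_cost n (\<lambda>e. f e + g e) y = cut_cost n f y + cut_cost n g y"
  unfolding cut_cost_def by (simp add: case_prod_beta distrib_right sum.distrib)

lemma cost_if: "cut_cost n (\<lambda>e. if P then f e else 0) y = (if P then cut_cost n f y else 0)"
  unfolding cut_cost_def by (simp add: case_prod_beta)

lemma cost_sum: "cut_cost n (\<lambda>e. \<Sum>x\<in>X. g x e) y = (\<Sum>x\<in>X. cut_cost n (g x) y)"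
  unfolding cut_cost_def by (simp add: case_prod_beta sum_distrib_right sum.swap[of _ X])

lemma cost_edge:
  assumes "a \<noteq> b" "a < n" "b < n"
  shows "cut_cost n (\<lambda>e. if e = {a, b} then c else 0) y = c * (1 - y a * y b)"
proof -
  let ?m = "(min a b, max a b)"
  have "cut_cost n (\<lambda>e. if e = {a, b} then c else 0) y =
     (\<Sum>p\<in>{(i, j). i < j \<and> j < n}. if p = ?m then c * (1 - y a * y b) else 0)"
    unfolding cut_cost_def
  proof (rule sum.cong[OF refl])
    fix p assume "p \<in> {(i, j). i < j \<and> j < n}"
    then obtain i j where p: "p = (i,j)" "i < j" by auto
    have "({i,j} = {a,b}) = ((i,j) = ?m)" using p(2) assms(1)
      by (auto simp: doubleton_eq_iff min_def max_def)
    then show "(case p of (i, j) \<Rightarrow> (if {i, j} = {a, b} then c else 0) * (1 - y i * y j)) =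
          (if p = ?m then c * (1 - y a * y b) else 0)"
      using p assms(1) by (auto simp: min_def max_def)
  qed
  also have "\<dots> = c * (1 - y a * y b)"
    using fin_S[of n] assms by (simp add: min_def max_def)
  finally show ?thesis .
qed

lemma fin_pairs: "finite (pairs n)"
  by (rule finite_subset[of _ "Pow {..<n}"]) (auto simp: pairs_def)

theorem lemma5p2:
  fixes n s t :: nat
  assumes "n \<ge> 3" and "s < n" and "t < n" and "s \<noteq> t"
  shows "\<exists>A :: (nat \<Rightarrow> real) \<Rightarrow> nat set \<Rightarrow> real \<Rightarrow> (nat set \<Rightarrow> real).
    \<forall>w y0 u v z.
      argmin_cuts n s t w = {y0} \<longrightarrow> u < n \<longrightarrow> v < n \<longrightarrow> u \<noteq> v \<longrightarrow>
      -1 \<le> z \<longrightarrow> z \<le> 1 \<longrightarrow>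
      (\<forall>e \<in> pairs n. A y0 {u, v} z e \<noteq> 0 \<longrightarrow> e \<in> dom_pairs n s t) \<and>
      l1norm n (A y0 {u, v} z) \<le> 2 \<and>
      argmin_cuts n s t (\<lambda>e. (w({u, v} := w {u, v} + z)) e + A y0 {u, v} z e) = {y0}"
proof -
  define p where "p = (\<lambda>(y0::nat\<Rightarrow>real) x. if y0 x = 1 then s else t)"
  define g where "g = (\<lambda>y0 (z::real) x e. if x \<notin> {s,t} \<and> e = {p y0 x, x} then \<bar>z\<bar> else 0)"
  define A where "A = (\<lambda>y0 E z (e::nat set). if (0 \<le> z) = (\<exists>a\<in>E. \<exists>b\<in>E. y0 a \<noteq> y0 b)
        then (\<Sum>x\<in>E. g y0 z x e) else 0)"
  show ?thesis
  proof (rule exI[of _ A], intro allI impI conjI)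
    fix w y0 u v and z :: real
    assume am: "argmin_cuts n s t w = {y0}" and uv: "u < n" "v < n" "u \<noteq> v"
      and z: "-1 \<le> z" "z \<le> 1"
    have y0c: "y0 \<in> cuts n s t" using am unfolding argmin_cuts_def by auto
    have y0v: "\<And>i. i < n \<Longrightarrow> y0 i = 1 \<or> y0 i = -1" "y0 s = 1" "y0 t = -1"
      using y0c unfolding cuts_def by auto
    have gnn: "\<And>x e. g y0 z x e \<ge> 0" unfolding g_def by auto
    show "\<forall>e\<in>pairs n. A y0 {u, v} z e \<noteq> 0 \<longrightarrow> e \<in> dom_pairs n s t"
    proof (intro ballI impI)
      fix e assume "e \<in> pairs n" "A y0 {u, v} z e \<noteq> 0"
      then have "(\<Sum>x\<in>{u,v}. g y0 z x e) \<noteq> 0" unfolding A_def by (auto split: if_splits)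
      then obtain x where "x \<in> {u,v}" "g y0 z x e \<noteq> 0" by (meson sum.neutral)
      then have x: "x \<in> {u,v}" "x \<notin> {s,t}" "e = {p y0 x, x}"
        unfolding g_def by (auto split: if_splits)
      have "p y0 x \<in> {s,t}" unfolding p_def by auto
      then show "e \<in> dom_pairs n s t" unfolding dom_pairs_def using x uv by blast
    qed
    show "l1norm n (A y0 {u, v} z) \<le> 2"
    proof -
      have "l1norm n (A y0 {u, v} z) \<le> (\<Sum>e\<in>pairs n. \<Sum>x\<in>{u,v}. g y0 z x e)"
        unfolding l1norm_def A_def
        by (rule sum_mono) (auto simp: gnn sum_nonneg)
      also have "\<dots> = (\<Sum>x\<in>{u,v}. \<Sum>e\<in>pairs n. g y0 z x e)" by (rule sum.swap)
      also have "\<dots> \<le> (\<Sum>x\<in>{u,v}. \<bar>z\<bar>)"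
      proof (rule sum_mono)
        fix x
        have "(\<Sum>e\<in>pairs n. g y0 z x e) = (\<Sum>e\<in>pairs n. if e = {p y0 x, x} then (if x \<notin> {s,t} then \<bar>z\<bar> else 0) else 0)"
          unfolding g_def by (rule sum.cong) auto
        also have "\<dots> \<le> \<bar>z\<bar>" using fin_pairs[of n] by simp
        finally show "(\<Sum>e\<in>pairs n. g y0 z x e) \<le> \<bar>z\<bar>" .
      qed
      also have "\<dots> = 2 * \<bar>z\<bar>" using uv by simp
      also have "\<dots> \<le> 2" using z by simp
      finally show ?thesis .
    qed
    define W where "W = (\<lambda>e. (w({u, v} := w {u, v} + z)) e + A y0 {u, v} z e)"
    define cond where "cond = ((0 \<le> z) = (y0 u \<noteq> y0 v))"
    have costW: "cut_cost n W y = cut_cost n w y + z * (1 - y u * y v) +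
        (if cond then \<bar>z\<bar> * (1 - y0 u * y u) + \<bar>z\<bar> * (1 - y0 v * y v) else 0)"
      if yc: "y \<in> cuts n s t" for y
    proof -
      have yv: "y s = 1" "y t = -1" using yc unfolding cuts_def by auto
      have gx: "cut_cost n (g y0 z x) y = \<bar>z\<bar> * (1 - y0 x * y x)" if "x < n" for x
      proof (cases "x \<in> {s,t}")
        case True
        then have "g y0 z x = (\<lambda>e. if True then 0 else 0)" unfolding g_def by auto
        then have "cut_cost n (g y0 z x) y = 0" by (simp add: cut_cost_def)
        then show ?thesis using True yv y0v by auto
      next
        case False
        have px: "p y0 x \<noteq> x" "p y0 x < n" using False assms unfolding p_def by auto
        have "g y0 z x = (\<lambda>e. if e = {p y0 x, x} then \<bar>z\<bar> else 0)"
          unfolding g_def using False by auto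
        then have "cut_cost n (g y0 z x) y = \<bar>z\<bar> * (1 - y (p y0 x) * y x)"
          using cost_edge[OF px that] by simp
        moreover have "y (p y0 x) = y0 x" using y0v(1)[OF that] yv unfolding p_def by auto
        ultimately show ?thesis by simp
      qed
      have condE: "((0 \<le> z) = (\<exists>a\<in>{u,v}. \<exists>b\<in>{u,v}. y0 a \<noteq> y0 b)) = cond"
        unfolding cond_def by auto
      have Aeq: "A y0 {u,v} z = (\<lambda>e. if cond then (\<Sum>x\<in>{u,v}. g y0 z x e) else 0)"
        unfolding A_def condE by simp
      have weq: "w({u, v} := w {u, v} + z) = (\<lambda>e. w e + (if e = {u,v} then z else 0))"
        by auto
      have "cut_cost n W y = cut_cost n w y + cut_cost n (\<lambda>e. if e = {u,v} then z else 0) y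
          + cut_cost n (A y0 {u,v} z) y"
        unfolding W_def weq cost_add by simp
      also have "\<dots> = cut_cost n w y + z * (1 - y u * y v) +
        (if cond then \<bar>z\<bar> * (1 - y0 u * y u) + \<bar>z\<bar> * (1 - y0 v * y v) else 0)"
        unfolding Aeq cost_if cost_sum using cost_edge[OF uv(3) uv(1) uv(2)] gx uv by simp
      finally show ?thesis .
    qed
    have key: "z * (1 - y u * y v) +
        (if cond then \<bar>z\<bar> * (1 - y0 u * y u) + \<bar>z\<bar> * (1 - y0 v * y v) else 0)
        \<ge> z * (1 - y0 u * y0 v)" if yc: "y \<in> cuts n s t" for y
    proof -
      have "y u = 1 \<or> y u = -1" "y v = 1 \<or> y v = -1" using yc uv unfolding cuts_def by auto
      moreover have "y0 u = 1 \<or> y0 u = -1" "y0 v = 1 \<or> y0 v = -1" using y0v uv by auto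
      ultimately show ?thesis unfolding cond_def
        by (cases "0 \<le> z") (auto simp: abs_if)
    qed
    have W0: "cut_cost n W y0 = cut_cost n w y0 + z * (1 - y0 u * y0 v)"
    proof -
      have "y0 u * y0 u = 1" "y0 v * y0 v = 1" using y0v(1)[OF uv(1)] y0v(1)[OF uv(2)] by auto
      then show ?thesis using costW[OF y0c] by simp
    qed
    show "argmin_cuts n s t W = {y0}"
    proof -
      have strict: "cut_cost n W y0 < cut_cost n W y" if yc: "y \<in> cuts n s t" "y \<noteq> y0" for y
      proof -
        have "y \<notin> argmin_cuts n s t w" using am that by auto
        then obtain y' where "y' \<in> cuts n s t" "cut_cost n w y > cut_cost n w y'"
          using yc unfolding argmin_cuts_def by auto
        moreover have "cut_cost n w y0 \<le> cut_cost n w y'" using am calculation(1)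
          unfolding argmin_cuts_def by auto
        ultimately have "cut_cost n w y0 < cut_cost n w y" by simp
        then show ?thesis using W0 costW[OF yc(1)] key[OF yc(1)] by linarith
      qed
      have le: "cut_cost n W y0 \<le> cut_cost n W y" if "y \<in> cuts n s t" for y
        using strict[OF that] by (cases "y = y0") auto
      show ?thesis unfolding argmin_cuts_def
      proof (intro equalityI subsetI)
        fix x assume "x \<in> {y \<in> cuts n s t. \<forall>y'\<in>cuts n s t. cut_cost n W y \<le> cut_cost n W y'}"
        then have "x \<in> cuts n s t" "cut_cost n W x \<le> cut_cost n W y0" using y0c by auto
        then show "x \<in> {y0}" using strict by force
      qed (use le y0c in auto)
    qed
  qed
qed

end
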